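(* Assume (F) and (H), and let $\varepsilon>0$. If $c\ge \max_{v\in[0,1]}f(v)-\min_{v\in[0,1]}h'(v)+2\sqrt{\varepsilon\sup_{v\in(0,1]}\frac{f(v)}{v}}$, then the problem $y'=(c+h'(v))\frac{\sqrt{y(2\varepsilon+y)}}{\varepsilon+y}-f(v)$ on $[0,1]$, $y(0)=0$, $y(1)=0$, $y>0$ on $(0,1)$, has a solution, i.e., $c$ is an admissible speed.
   Context: Assumptions. - (F): $f\in C([0,1])$, $f(0)=f(1)=0$, $f(s)>0$ for $s\in(0,1)$, and there is $k>0$ with $f(s)\le ks$ and $f(s)\le k(1-s)$ for all $s\in[0,1]$. - (H): $h\in C^2([0,1])$ with $h(0)=h'(0)=0$. *)

theory Defs
  imports "HOL-Analysis.Analysis"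
begin

end

theory Submission
  imports Defs
begin



lemma deriv_cont:
  assumes "\<And>t. t \<in> S \<Longrightarrow> (f has_real_derivative f' t) (at t within S)"
  shows "continuous_on S f"
  using assms by (meson DERIV_continuous continuous_on_eq_continuous_within)

lemma mono_bound:
  fixes F G F' G' :: "real \<Rightarrow> real"
  assumes dF: "\<And>t. t \<in> {0..1} \<Longrightarrow> (F has_real_derivative F' t) (at t within {0..1})"
    and dG: "\<And>t. t \<in> {0..1} \<Longrightarrow> (G has_real_derivative G' t) (at t within {0..1})"
    and le: "\<And>t. t \<in> {0..1} \<Longrightarrow> F' t \<le> G' t"
    and t: "t \<in> {0..1}"
  shows "F t - F 0 \<le> G t - G 0"
proof -
  have sub: "{0..t} \<subseteq> {0..1}" using t by auto
  have "(F' has_integral (F t - F 0)) {0..t}"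
    apply (rule fundamental_theorem_of_calculus) using t apply simp
    unfolding has_real_derivative_iff_has_vector_derivative[symmetric]
    by (rule DERIV_subset[OF dF sub]) (use t in auto)
  moreover have "(G' has_integral (G t - G 0)) {0..t}"
    apply (rule fundamental_theorem_of_calculus) using t apply simp
    unfolding has_real_derivative_iff_has_vector_derivative[symmetric]
    by (rule DERIV_subset[OF dG sub]) (use t in auto)
  ultimately show ?thesis
    by (rule has_integral_le) (use le sub in auto)
qed

lemma barrier:
  fixes D D' :: "real \<Rightarrow> real"
  assumes dD: "\<And>t. t \<in> {0..1} \<Longrightarrow> (D has_real_derivative D' t) (at t within {0..1})"
    and pos: "\<And>t. t \<in> {0..1} \<Longrightarrow> D t > 0 \<Longrightarrow> D' t \<ge> 0"
    and D1: "D 1 \<le> 0"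
    and v: "v \<in> {0..1}"
  shows "D v \<le> 0"
proof (rule ccontr)
  assume "\<not> D v \<le> 0"
  hence Dv: "D v > 0" by simp
  have cont: "continuous_on {0..1} D" using dD by (rule deriv_cont)
  define S where "S = {v..1} \<inter> D -` {..0}"
  have v1: "v \<le> 1" using v by auto
  have "closed S" unfolding S_def
    by (rule continuous_closed_preimage) (use cont v in \<open>auto intro: continuous_on_subset\<close>)
  moreover have "1 \<in> S" using D1 v1 by (auto simp: S_def)
  moreover have "bdd_below S" unfolding S_def by (rule bdd_belowI[of _ v]) auto
  ultimately have IS: "Inf S \<in> S" using closed_contains_Inf by blast
  define w where "w = Inf S"
  have wS: "v \<le> w" "w \<le> 1" "D w \<le> 0" using IS by (auto simp: S_def w_def)
  have vw: "v < w" using wS Dv by (metis order_le_less not_le)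
  have below: "D x > 0" if "v \<le> x" "x < w" for x
  proof (rule ccontr)
    assume "\<not> D x > 0"
    hence "x \<in> S" using that wS by (auto simp: S_def)
    hence "w \<le> x" unfolding w_def using \<open>bdd_below S\<close> by (rule cInf_lower)
    thus False using that by simp
  qed
  have "\<exists>l z. v < z \<and> z < w \<and> DERIV D z :> l \<and> D w - D v = (w - v) * l"
  proof (rule MVT[OF vw])
    show "continuous_on {v..w} D" using cont v wS by (auto intro: continuous_on_subset)
    fix x assume "v < x" "x < w"
    hence "0 < x" "x < 1" using v wS by auto
    hence "(D has_real_derivative D' x) (at x)" using dD[of x] at_within_Icc_at[of 0 x 1] by auto
    thus "D differentiable (at x)" by (auto simp: real_differentiable_def)
  qed
  then obtain l z where z: "v < z" "z < w" "DERIV D z :> l" "D w - D v = (w - v) * l" by blast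
  have "0 < z" "z < 1" using z v wS by auto
  hence "(D has_real_derivative D' z) (at z)" using dD[of z] at_within_Icc_at[of 0 z 1] by auto
  hence "l = D' z" using z(3) DERIV_unique by blast
  moreover have "D' z \<ge> 0" using pos[of z] below[of z] z \<open>0<z\<close> \<open>z<1\<close> by auto
  ultimately have "0 \<le> (w - v) * l" using vw by simp
  hence "D w \<ge> D v" using z(4) by linarith
  thus False using wS Dv by simp
qed




lemma real_derivative_sequence:
  fixes S :: "real set"
  assumes cvs: "convex S"
      and df:  "\<And>n x. x \<in> S \<Longrightarrow> (f n has_real_derivative f' n x) (at x within S)"
      and conv: "\<And>e. 0 < e \<Longrightarrow> \<exists>N. \<forall>n x. n \<ge> N \<longrightarrow> x \<in> S \<longrightarrow> \<bar>f' n x - g' x\<bar> \<le> e"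
      and x: "x \<in> S" and tf: "((\<lambda>n. f n x) \<longlongrightarrow> l) sequentially"
    shows "\<exists>g. \<forall>x \<in> S. ((\<lambda>n. f n x) \<longlongrightarrow> g x) sequentially \<and>
                       (g has_real_derivative (g' x)) (at x within S)"
  unfolding has_field_derivative_def
proof (rule has_derivative_sequence [OF cvs _ _ x])
  show "(\<lambda>n. f n x) \<longlonglongrightarrow> l"
    by (rule tf)
next 
  have **: "\<exists>N. \<forall>n\<ge>N. \<forall>x\<in>S. \<forall>h. norm (f' n x * h - g' x * h) \<le> \<epsilon> * norm h"
    if eps: "\<epsilon> > 0" for \<epsilon>::real
  proof -
    obtain N where N: "\<forall>n x. n \<ge> N \<longrightarrow> x \<in> S \<longrightarrow> \<bar>f' n x - g' x\<bar> \<le> \<epsilon>" using conv[OF eps] by blast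
    show ?thesis
    proof (intro exI allI impI ballI)
      fix n x h assume "N \<le> n" "x \<in> S"
      hence "\<bar>f' n x - g' x\<bar> \<le> \<epsilon>" using N by blast
      hence "\<bar>h\<bar> * \<bar>f' n x - g' x\<bar> \<le> \<epsilon> * \<bar>h\<bar>" by (metis abs_ge_zero mult_left_mono mult.commute)
      thus "norm (f' n x * h - g' x * h) \<le> \<epsilon> * norm h" by (simp add: abs_mult right_diff_distrib[symmetric] mult.commute)
    qed
  qed
  show "\<And>e. e > 0 \<Longrightarrow> \<forall>\<^sub>F n in sequentially. \<forall>x\<in>S. \<forall>h. norm (f' n x * h - g' x * h) \<le> e * norm h"
    unfolding eventually_sequentially by (blast intro: **)
qed (use df in \<open>auto simp: has_field_derivative_def\<close>)

lemma cauchy_est: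
  fixes p q \<Phi> w z Dw Dz :: "real \<Rightarrow> real"
  assumes qnn: "\<And>t. t \<in> {0..1} \<Longrightarrow> 0 \<le> q t"
    and mono: "\<And>x y. x \<le> y \<Longrightarrow> \<Phi> x \<le> \<Phi> y"
    and w0: "w 0 = z 0"
    and dw: "\<And>t. t \<in> {0..1} \<Longrightarrow> (w has_real_derivative Dw t) (at t within {0..1})"
    and dz: "\<And>t. t \<in> {0..1} \<Longrightarrow> (z has_real_derivative Dz t) (at t within {0..1})"
    and ew: "\<And>t. t \<in> {0..1} \<Longrightarrow> \<bar>Dw t - (p t - q t * \<Phi> (w t))\<bar> \<le> a"
    and ez: "\<And>t. t \<in> {0..1} \<Longrightarrow> \<bar>Dz t - (p t - q t * \<Phi> (z t))\<bar> \<le> b"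
    and t: "t \<in> {0..1}"
  shows "\<bar>w t - z t\<bar> \<le> a + b"
proof (rule field_le_epsilon)
  fix \<gamma> :: real assume g: "0 < \<gamma>"
  define S where "S = (\<lambda>t. sqrt ((w t - z t)^2 + \<gamma>^2))"
  have Spos: "S t > 0" for t unfolding S_def using g by (intro real_sqrt_gt_zero) (simp add: add_nonneg_pos)
  have dS: "(S has_real_derivative ((w s - z s) * (Dw s - Dz s)) / S s) (at s within {0..1})"
    if "s \<in> {0..1}" for s
  proof -
    have d1: "((\<lambda>x. (w x - z x)^2 + \<gamma>^2) has_real_derivative 2*(w s - z s)*(Dw s - Dz s)) (at s within {0..1})"
      by (auto intro!: derivative_eq_intros dw dz that)
    have p: "0 < (w s - z s)^2 + \<gamma>^2" using g by (simp add: add_nonneg_pos)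
    have "(S has_real_derivative (inverse (S s) / 2) * (2*(w s - z s)*(Dw s - Dz s))) (at s within {0..1})"
      unfolding S_def by (rule DERIV_chain2[OF DERIV_real_sqrt[OF p] d1])
    thus ?thesis by (rule DERIV_cong) (use Spos[of s] in \<open>simp add: field_simps\<close>)
  qed
  have key: "((w s - z s) * (Dw s - Dz s)) / S s \<le> a + b" if s: "s \<in> {0..1}" for s
  proof -
    define e where "e = w s - z s"
    have m: "e * (q s * (\<Phi> (w s) - \<Phi> (z s))) \<ge> 0"
    proof (cases "w s \<le> z s")
      case True
      hence "\<Phi> (w s) - \<Phi> (z s) \<le> 0" "e \<le> 0" using mono[OF True] by (auto simp: e_def)
      thus ?thesis using qnn[OF s] by (simp add: mult_nonpos_nonpos mult_nonneg_nonpos)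
    next
      case False
      hence "\<Phi> (w s) - \<Phi> (z s) \<ge> 0" "e \<ge> 0" using mono[of "z s" "w s"] by (auto simp: e_def)
      thus ?thesis using qnn[OF s] by simp
    qed
    have "e * (Dw s - Dz s) = e * ((Dw s - (p s - q s * \<Phi> (w s))) - (Dz s - (p s - q s * \<Phi> (z s))))
        - e * (q s * (\<Phi> (w s) - \<Phi> (z s)))" by (simp add: algebra_simps)
    also have "\<dots> \<le> e * ((Dw s - (p s - q s * \<Phi> (w s))) - (Dz s - (p s - q s * \<Phi> (z s))))"
      using m by simp
    also have "\<dots> \<le> \<bar>e\<bar> * (a + b)"
    proof -
      have "\<bar>(Dw s - (p s - q s * \<Phi> (w s))) - (Dz s - (p s - q s * \<Phi> (z s)))\<bar> \<le> a + b"
        using ew[OF s] ez[OF s] by linarith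
      hence "\<bar>e * ((Dw s - (p s - q s * \<Phi> (w s))) - (Dz s - (p s - q s * \<Phi> (z s))))\<bar> \<le> \<bar>e\<bar> * (a + b)"
        by (simp add: abs_mult mult_left_mono)
      thus ?thesis by linarith
    qed
    also have "\<dots> \<le> S s * (a + b)"
    proof (rule mult_right_mono)
      show "\<bar>e\<bar> \<le> S s" unfolding S_def e_def
        by (rule real_le_rsqrt) (simp add: power2_abs)
      show "0 \<le> a + b" using ew[OF s] ez[OF s] by linarith
    qed
    finally show ?thesis using Spos[of s] unfolding e_def by (simp add: divide_le_eq mult.commute)
  qed
  have "S t - S 0 \<le> (a + b) * t - (a + b) * 0"
    by (rule mono_bound[OF dS _ key t]) (auto intro!: derivative_eq_intros)
  moreover have "S 0 = \<gamma>" using w0 g unfolding S_def by simp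
  moreover have "\<bar>w t - z t\<bar> \<le> S t" unfolding S_def by (rule real_le_rsqrt) (simp add: power2_abs)
  moreover have "(a + b) * t \<le> a + b"
  proof -
    have "0 \<le> a + b" using ew[OF t] ez[OF t] by linarith
    thus ?thesis using t by (simp add: mult_left_le)
  qed
  ultimately show "\<bar>w t - z t\<bar> \<le> a + b + \<gamma>" by linarith
qed




lemma bound_cont:
  fixes g :: "real \<Rightarrow> real"
  assumes "continuous_on {0..1} g"
  shows "\<exists>B. \<forall>t\<in>{0..1}. \<bar>g t\<bar> \<le> B"
  using compact_continuous_image[OF assms compact_Icc]
  by (auto dest!: compact_imp_bounded simp: bounded_iff)

lemma lip_cont:
  fixes \<Psi> :: "real \<Rightarrow> real"
  assumes "\<And>x y. \<bar>\<Psi> x - \<Psi> y\<bar> \<le> K * \<bar>x - y\<bar>" "0 \<le> K"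
  shows "continuous_on S \<Psi>"
proof -
  have "K-lipschitz_on S \<Psi>" using assms by (auto simp: lipschitz_on_def dist_real_def)
  thus ?thesis by (rule lipschitz_on_continuous_on)
qed

lemma abs_bound:
  fixes F G F' G' :: "real \<Rightarrow> real"
  assumes dF: "\<And>t. t \<in> {0..1} \<Longrightarrow> (F has_real_derivative F' t) (at t within {0..1})"
    and dG: "\<And>t. t \<in> {0..1} \<Longrightarrow> (G has_real_derivative G' t) (at t within {0..1})"
    and le: "\<And>t. t \<in> {0..1} \<Longrightarrow> \<bar>F' t\<bar> \<le> G' t"
    and F0: "F 0 = 0" and G0: "G 0 = 0"
    and t: "t \<in> {0..1}"
  shows "\<bar>F t\<bar> \<le> G t"
proof -
  have le1: "F' s \<le> G' s" if "s \<in> {0..1}" for s using le[OF that] by linarith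
  have le2: "- F' s \<le> G' s" if "s \<in> {0..1}" for s using le[OF that] by linarith
  have "F t - F 0 \<le> G t - G 0"
    by (rule mono_bound[OF dF dG le1 t])
  moreover have "(- F t) - (- F 0) \<le> G t - G 0"
    by (rule mono_bound[where F="\<lambda>t. - F t" and F'="\<lambda>t. - F' t", OF DERIV_minus[OF dF] dG _ t])
       (auto intro: le2)
  ultimately show ?thesis using F0 G0 by linarith
qed

lemma approx_sol:
  fixes p q \<Psi> :: "real \<Rightarrow> real"
  assumes cp: "continuous_on {0..1} p" and cq: "continuous_on {0..1} q"
    and lip: "\<And>x y. \<bar>\<Psi> x - \<Psi> y\<bar> \<le> K * \<bar>x - y\<bar>" and K: "0 \<le> K" and eta: "0 < \<eta>"
  shows "\<exists>w D. w 0 = u0 \<and> (\<forall>t\<in>{0..1}. (w has_real_derivative D t) (at t within {0..1})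
            \<and> \<bar>D t - (p t - q t * \<Psi> (w t))\<bar> \<le> \<eta>)"
proof -
  have c\<Psi>: "continuous_on UNIV \<Psi>" using lip K by (rule lip_cont)
  obtain Q where Q: "\<And>t. t \<in> {0..1} \<Longrightarrow> \<bar>q t\<bar> \<le> Q" using bound_cont[OF cq] by blast
  have cB: "continuous_on {0..1} (\<lambda>t. p t - q t * \<Psi> u0)" by (intro continuous_intros cp cq)
  obtain B where B: "\<And>t. t \<in> {0..1} \<Longrightarrow> \<bar>p t - q t * \<Psi> u0\<bar> \<le> B" using bound_cont[OF cB] by blast
  have Q0: "0 \<le> Q" using Q[of 0] by auto
  have B0: "0 \<le> B" using B[of 0] by auto
  define T where "T = (\<lambda>w t. u0 + integral {0..t} (\<lambda>s. p s - q s * \<Psi> (w s)))"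
  define it where "it k = (T ^^ k) (\<lambda>t. u0)" for k
  have itS: "it (Suc k) = T (it k)" for k by (simp add: it_def)
  have it0f: "it 0 = (\<lambda>t. u0)" by (simp add: it_def)
  have cg: "continuous_on {0..1} (\<lambda>s. p s - q s * \<Psi> (w s))" if "continuous_on {0..1} w" for w
    by (intro continuous_intros cp cq continuous_on_compose2[OF c\<Psi> that]) auto
  have dT: "(T w has_real_derivative (p t - q t * \<Psi> (w t))) (at t within {0..1})"
    if "continuous_on {0..1} w" "t \<in> {0..1}" for w t
    using DERIV_add[OF DERIV_const[of u0] integral_has_real_derivative[OF cg[OF that(1)] that(2)]]
    by (simp add: T_def)
  have T0: "T w 0 = u0" for w by (simp add: T_def)
  have cit: "continuous_on {0..1} (it k)" for k
  proof (induction k)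
    case 0 thus ?case by (simp add: it0f)
  next
    case (Suc k) show ?case unfolding itS by (rule deriv_cont[OF dT[OF Suc.IH]])
  qed
  have dit: "(it (Suc k) has_real_derivative (p t - q t * \<Psi> (it k t))) (at t within {0..1})"
    if "t \<in> {0..1}" for k t unfolding itS by (rule dT[OF cit that])
  have it0: "it k 0 = u0" for k by (cases k) (simp_all add: it0f itS T0)
  have bnd: "\<forall>t\<in>{0..1}. \<bar>it (Suc k) t - it k t\<bar> \<le> B * (Q*K)^k * t^(Suc k) / fact (Suc k)" for k
  proof (induction k)
    case 0
    show ?case
    proof
      fix t :: real assume t: "t \<in> {0..1}"
      have "\<bar>it (Suc 0) t - it 0 t\<bar> \<le> B * t"
      proof (rule abs_bound[OF _ _ _ _ _ t])
        show "((\<lambda>t. it (Suc 0) t - it 0 t) has_real_derivative (p s - q s * \<Psi> u0) - 0) (at s within {0..1})"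
          if "s \<in> {0..1}" for s
          using DERIV_diff[OF dit[OF that, of 0] DERIV_const[of u0]] by (simp add: it0f)
        show "((\<lambda>t. B * t) has_real_derivative B) (at s within {0..1})" for s
          by (auto intro!: derivative_eq_intros)
      qed (use B it0 in auto)
      thus "\<bar>it (Suc 0) t - it 0 t\<bar> \<le> B * (Q*K)^0 * t^(Suc 0) / fact (Suc 0)" by simp
    qed
  next
    case (Suc k)
    show ?case
    proof
      fix t :: real assume t: "t \<in> {0..1}"
      define C where "C = B * (Q*K)^(Suc k)"
      have "\<bar>it (Suc (Suc k)) t - it (Suc k) t\<bar> \<le> C * t^(Suc (Suc k)) / fact (Suc (Suc k))"
      proof (rule abs_bound[OF _ _ _ _ _ t])
        show "((\<lambda>t. it (Suc (Suc k)) t - it (Suc k) t) has_real_derivative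
               (p s - q s * \<Psi> (it (Suc k) s)) - (p s - q s * \<Psi> (it k s))) (at s within {0..1})"
          if "s \<in> {0..1}" for s
          using DERIV_diff[OF dit[OF that, of "Suc k"] dit[OF that, of k]] by simp
        show "((\<lambda>t. C * t^(Suc (Suc k)) / fact (Suc (Suc k))) has_real_derivative
                 C * (real (Suc (Suc k)) * s^(Suc k)) / fact (Suc (Suc k))) (at s within {0..1})" for s
        proof -
          have "((\<lambda>t. t^(Suc (Suc k))) has_real_derivative real (Suc (Suc k)) * s^(Suc k)) (at s within {0..1})"
            using DERIV_pow[of "Suc (Suc k)" s "{0..1}"] by simp
          from DERIV_cdivide[OF DERIV_cmult[OF this, of C], of "fact (Suc (Suc k))"]
          show ?thesis by simp
        qed
        show "\<bar>(p s - q s * \<Psi> (it (Suc k) s)) - (p s - q s * \<Psi> (it k s))\<bar>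
               \<le> C * (real (Suc (Suc k)) * s^(Suc k)) / fact (Suc (Suc k))" if s: "s \<in> {0..1}" for s
        proof -
          have "\<bar>(p s - q s * \<Psi> (it (Suc k) s)) - (p s - q s * \<Psi> (it k s))\<bar>
                = \<bar>q s\<bar> * \<bar>\<Psi> (it (Suc k) s) - \<Psi> (it k s)\<bar>"
            by (simp add: abs_mult[symmetric] algebra_simps)
          also have "\<dots> \<le> Q * (K * \<bar>it (Suc k) s - it k s\<bar>)"
            by (rule mult_mono[OF Q[OF s] lip Q0]) simp
          also have "\<dots> \<le> Q * (K * (B * (Q*K)^k * s^(Suc k) / fact (Suc k)))"
            using Suc.IH s Q0 K by (intro mult_left_mono) auto
          also have "\<dots> = C * s^(Suc k) / fact (Suc k)"
            unfolding C_def by (simp add: field_simps del: fact_Suc)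
          also have "\<dots> = C * (real (Suc (Suc k)) * s^(Suc k)) / fact (Suc (Suc k))"
          proof -
            have f: "fact (Suc (Suc k)) = real (Suc (Suc k)) * (fact (Suc k)::real)" by (rule fact_Suc)
            have nz: "real (Suc (Suc k)) \<noteq> 0" by simp
            show ?thesis unfolding f using nz by (metis mult.left_commute[of C] mult_divide_mult_cancel_left)
          qed
          finally show ?thesis .
        qed
      qed (use it0 in auto)
      thus "\<bar>it (Suc (Suc k)) t - it (Suc k) t\<bar> \<le> B * (Q*K)^(Suc k) * t^(Suc (Suc k)) / fact (Suc (Suc k))"
        by (simp add: C_def)
    qed
  qed
  have "(\<lambda>n. inverse (fact n) * (Q*K)^n) \<longlonglongrightarrow> 0"
    by (rule summable_LIMSEQ_zero[OF summable_exp])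
  hence "\<forall>\<^sub>F n in sequentially. inverse (fact n) * (Q*K)^n < \<eta> / (B + 1)"
    using eta B0 by (intro order_tendstoD) auto
  then obtain N where N: "\<And>n. n \<ge> N \<Longrightarrow> inverse (fact n) * (Q*K)^n < \<eta> / (B + 1)"
    unfolding eventually_sequentially by blast
  have small: "B * (Q*K)^(Suc N) / fact (Suc N) \<le> \<eta>"
  proof -
    have a: "(Q*K)^(Suc N) / fact (Suc N) < \<eta> / (B + 1)" using N[of "Suc N"] by (simp add: field_simps)
    have b: "0 \<le> (Q*K)^(Suc N) / fact (Suc N)" using Q0 K by simp
    have "B * ((Q*K)^(Suc N) / fact (Suc N)) \<le> (B + 1) * ((Q*K)^(Suc N) / fact (Suc N))"
      using mult_right_mono[of B "B+1" "(Q*K)^(Suc N) / fact (Suc N)"] b by linarith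
    also have "\<dots> \<le> (B + 1) * (\<eta> / (B + 1))" using a B0 by (intro mult_left_mono) auto
    also have "\<dots> = \<eta>" using B0 by simp
    finally show ?thesis by simp
  qed
  show ?thesis
  proof (intro exI conjI ballI)
    show "it (Suc N) 0 = u0" by (rule it0)
    fix t :: real assume t: "t \<in> {0..1}"
    show "(it (Suc N) has_real_derivative (p t - q t * \<Psi> (it N t))) (at t within {0..1})" by (rule dit[OF t])
    have "\<bar>(p t - q t * \<Psi> (it N t)) - (p t - q t * \<Psi> (it (Suc N) t))\<bar>
          = \<bar>q t\<bar> * \<bar>\<Psi> (it (Suc N) t) - \<Psi> (it N t)\<bar>"
      by (simp add: abs_mult[symmetric] algebra_simps)
    also have "\<dots> \<le> Q * (K * \<bar>it (Suc N) t - it N t\<bar>)"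
      by (rule mult_mono[OF Q[OF t] lip Q0]) simp
    also have "\<dots> \<le> Q * (K * (B * (Q*K)^N * t^(Suc N) / fact (Suc N)))"
      using bnd[of N] t Q0 K by (intro mult_left_mono) auto
    also have "\<dots> \<le> Q * (K * (B * (Q*K)^N * 1 / fact (Suc N)))"
    proof -
      have "t^(Suc N) \<le> 1" using t by (intro power_le_one) auto
      hence "B * (Q*K)^N * t^(Suc N) \<le> B * (Q*K)^N * 1"
        using B0 Q0 K by (intro mult_left_mono) auto
      hence h1: "B * (Q*K)^N * t^(Suc N) / fact (Suc N) \<le> B * (Q*K)^N * 1 / fact (Suc N)"
        by (rule divide_right_mono) simp
      show ?thesis by (rule mult_left_mono[OF mult_left_mono[OF h1 K] Q0])
    qed
    also have "\<dots> = B * (Q*K)^(Suc N) / fact (Suc N)" by (simp add: field_simps)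
    also have "\<dots> \<le> \<eta>" by (rule small)
    finally show "\<bar>(p t - q t * \<Psi> (it N t)) - (p t - q t * \<Psi> (it (Suc N) t))\<bar> \<le> \<eta>" .
  qed
qed




lemma exist_mono:
  fixes p q \<Phi> :: "real \<Rightarrow> real" and \<Phi>n :: "nat \<Rightarrow> real \<Rightarrow> real" and e :: "nat \<Rightarrow> real"
  assumes cp: "continuous_on {0..1} p" and cq: "continuous_on {0..1} q"
    and qnn: "\<And>t. t \<in> {0..1} \<Longrightarrow> 0 \<le> q t"
    and mono: "\<And>x y. x \<le> y \<Longrightarrow> \<Phi> x \<le> \<Phi> y"
    and approx: "\<And>n x. \<bar>\<Phi>n n x - \<Phi> x\<bar> \<le> e n" and e: "e \<longlonglongrightarrow> 0"
    and lip: "\<And>n. \<exists>K\<ge>0. \<forall>x y. \<bar>\<Phi>n n x - \<Phi>n n y\<bar> \<le> K * \<bar>x - y\<bar>"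
  shows "\<exists>u. u 0 = u0 \<and> (\<forall>t\<in>{0..1}. (u has_real_derivative (p t - q t * \<Phi> (u t))) (at t within {0..1}))"
proof -
  obtain Q where Q: "\<And>t. t \<in> {0..1} \<Longrightarrow> \<bar>q t\<bar> \<le> Q" using bound_cont[OF cq] by blast
  have Q0: "0 \<le> Q" using Q[of 0] by auto
  define \<eta> where "\<eta> n = inverse (real (Suc n)) + Q * e n" for n
  have e0: "0 \<le> e n" for n using approx[of n 0] by linarith
  have \<eta>0: "0 \<le> \<eta> n" for n using e0[of n] Q0 by (simp add: \<eta>_def)
  have ex: "\<forall>n. \<exists>w D. w 0 = u0 \<and> (\<forall>t\<in>{0..1}. (w has_real_derivative D t) (at t within {0..1})
            \<and> \<bar>D t - (p t - q t * \<Phi> (w t))\<bar> \<le> \<eta> n)"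
  proof
    fix n
    obtain K where K: "K \<ge> 0" "\<And>x y. \<bar>\<Phi>n n x - \<Phi>n n y\<bar> \<le> K * \<bar>x - y\<bar>" using lip[of n] by blast
    have ip: "0 < inverse (real (Suc n))" by simp
    obtain w D where wD: "w 0 = u0" "\<forall>t\<in>{0..1}. (w has_real_derivative D t) (at t within {0..1})
            \<and> \<bar>D t - (p t - q t * \<Phi>n n (w t))\<bar> \<le> inverse (real (Suc n))"
      using approx_sol[OF cp cq K(2) K(1) ip, of u0] by blast
    show "\<exists>w D. w 0 = u0 \<and> (\<forall>t\<in>{0..1}. (w has_real_derivative D t) (at t within {0..1})
            \<and> \<bar>D t - (p t - q t * \<Phi> (w t))\<bar> \<le> \<eta> n)"
    proof (intro exI conjI ballI)
      show "w 0 = u0" by (rule wD(1))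
      fix t :: real assume t: "t \<in> {0..1}"
      show "(w has_real_derivative D t) (at t within {0..1})" using wD(2) t by blast
      have "\<bar>q t * (\<Phi>n n (w t) - \<Phi> (w t))\<bar> \<le> Q * e n"
        unfolding abs_mult using mult_mono[OF Q[OF t] approx Q0] by simp
      moreover have "\<bar>D t - (p t - q t * \<Phi>n n (w t))\<bar> \<le> inverse (real (Suc n))" using wD(2) t by blast
      ultimately show "\<bar>D t - (p t - q t * \<Phi> (w t))\<bar> \<le> \<eta> n"
        unfolding \<eta>_def by (simp add: algebra_simps)
    qed
  qed
  obtain W where W: "\<forall>n. \<exists>D. W n 0 = u0 \<and> (\<forall>t\<in>{0..1}. (W n has_real_derivative D t) (at t within {0..1})
            \<and> \<bar>D t - (p t - q t * \<Phi> (W n t))\<bar> \<le> \<eta> n)"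
    using choice[OF ex] by blast
  obtain DD where DD: "\<forall>n. W n 0 = u0 \<and> (\<forall>t\<in>{0..1}. (W n has_real_derivative DD n t) (at t within {0..1})
            \<and> \<bar>DD n t - (p t - q t * \<Phi> (W n t))\<bar> \<le> \<eta> n)"
    using choice[OF W] by blast
  have W0: "W n 0 = u0" for n using DD by blast
  have dW: "(W n has_real_derivative DD n t) (at t within {0..1})" if "t \<in> {0..1}" for n t
    using DD that by blast
  have eW: "\<bar>DD n t - (p t - q t * \<Phi> (W n t))\<bar> \<le> \<eta> n" if "t \<in> {0..1}" for n t
    using DD that by blast
  have cau: "\<bar>W n t - W m t\<bar> \<le> \<eta> n + \<eta> m" if "t \<in> {0..1}" for n m t
    by (rule cauchy_est[OF qnn mono _ dW dW eW eW that]) (simp_all add: W0)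
  have eta: "\<eta> \<longlonglongrightarrow> 0"
  proof -
    have "(\<lambda>n. inverse (real (Suc n)) + Q * e n) \<longlonglongrightarrow> 0 + Q * 0"
      by (intro tendsto_intros LIMSEQ_inverse_real_of_nat e)
    thus ?thesis by (simp add: \<eta>_def[abs_def])
  qed
  have cv: "convergent (\<lambda>n. W n t)" if t: "t \<in> {0..1}" for t
  proof -
    have "Cauchy (\<lambda>n. W n t)"
    proof (rule metric_CauchyI)
      fix \<epsilon> :: real assume "0 < \<epsilon>"
      hence "\<forall>\<^sub>F n in sequentially. \<eta> n < \<epsilon>/2" using eta by (intro order_tendstoD) auto
      then obtain M where M: "\<And>n. n \<ge> M \<Longrightarrow> \<eta> n < \<epsilon>/2" unfolding eventually_sequentially by blast
      show "\<exists>M. \<forall>m\<ge>M. \<forall>n\<ge>M. dist (W m t) (W n t) < \<epsilon>"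
      proof (intro exI allI impI)
        fix m n assume "M \<le> m" "M \<le> n"
        thus "dist (W m t) (W n t) < \<epsilon>" using cau[OF t, of m n] M[of m] M[of n] by (simp add: dist_real_def)
      qed
    qed
    thus ?thesis by (simp add: Cauchy_convergent_iff)
  qed
  define U where "U t = lim (\<lambda>n. W n t)" for t
  have conv: "(\<lambda>n. W n t) \<longlonglongrightarrow> U t" if "t \<in> {0..1}" for t
    using cv[OF that] unfolding U_def by (simp add: convergent_LIMSEQ_iff)
  have unif: "\<bar>W n t - U t\<bar> \<le> \<eta> n" if t: "t \<in> {0..1}" for n t
  proof -
    have a: "(\<lambda>m. \<bar>W n t - W m t\<bar>) \<longlonglongrightarrow> \<bar>W n t - U t\<bar>" by (intro tendsto_intros conv t)
    have b: "(\<lambda>m. \<eta> n + \<eta> m) \<longlonglongrightarrow> \<eta> n + 0" by (intro tendsto_intros eta)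
    have "\<bar>W n t - U t\<bar> \<le> \<eta> n + 0"
      by (rule tendsto_le[OF _ b a]) (use cau[OF t] in auto)
    thus ?thesis by simp
  qed
  have "\<exists>g. \<forall>x \<in> {0..1::real}. ((\<lambda>n. W n x) \<longlongrightarrow> g x) sequentially \<and>
                       (g has_real_derivative (p x - q x * \<Phi> (U x))) (at x within {0..1})"
  proof (rule real_derivative_sequence[OF convex_real_interval(5) dW])
    show "(0::real) \<in> {0..1}" by simp
    show "(\<lambda>n. W n 0) \<longlonglongrightarrow> u0" by (simp add: W0)
    fix \<epsilon> :: real assume ep: "0 < \<epsilon>"
    have "(\<lambda>j. Q * (2 * e j)) \<longlonglongrightarrow> Q * (2 * 0)" by (intro tendsto_intros e)
    hence "\<forall>\<^sub>F j in sequentially. Q * (2 * e j) < \<epsilon>/3" using ep by (intro order_tendstoD) auto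
    then obtain j where j: "Q * (2 * e j) < \<epsilon>/3" unfolding eventually_sequentially by blast
    obtain K where K: "K \<ge> 0" "\<And>x y. \<bar>\<Phi>n j x - \<Phi>n j y\<bar> \<le> K * \<bar>x - y\<bar>" using lip[of j] by blast
    have "(\<lambda>n. \<eta> n + Q * K * \<eta> n) \<longlonglongrightarrow> 0 + Q * K * 0" by (intro tendsto_intros eta)
    hence "\<forall>\<^sub>F n in sequentially. \<eta> n + Q * K * \<eta> n < 2*\<epsilon>/3" using ep by (intro order_tendstoD) auto
    then obtain N where N: "\<And>n. n \<ge> N \<Longrightarrow> \<eta> n + Q * K * \<eta> n < 2*\<epsilon>/3"
      unfolding eventually_sequentially by blast
    show "\<exists>N. \<forall>n x. n \<ge> N \<longrightarrow> x \<in> {0..1} \<longrightarrow> \<bar>DD n x - (p x - q x * \<Phi> (U x))\<bar> \<le> \<epsilon>"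
    proof (intro exI allI impI)
      fix n and x :: real assume n: "N \<le> n" and x: "x \<in> {0..1}"
      have ph: "\<bar>\<Phi> (W n x) - \<Phi> (U x)\<bar> \<le> 2 * e j + K * \<eta> n"
      proof -
        have "\<bar>\<Phi>n j (W n x) - \<Phi>n j (U x)\<bar> \<le> K * \<bar>W n x - U x\<bar>" by (rule K(2))
        also have "\<dots> \<le> K * \<eta> n" by (rule mult_left_mono[OF unif[OF x] K(1)])
        finally show ?thesis using approx[of j "W n x"] approx[of j "U x"] by linarith
      qed
      have "\<bar>q x * (\<Phi> (W n x) - \<Phi> (U x))\<bar> \<le> Q * (2 * e j + K * \<eta> n)"
        unfolding abs_mult by (rule mult_mono[OF Q[OF x] ph Q0]) simp
      hence "\<bar>q x * (\<Phi> (W n x) - \<Phi> (U x))\<bar> \<le> Q * (2 * e j) + Q * K * \<eta> n"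
        by (simp add: algebra_simps)
      moreover have "\<bar>DD n x - (p x - q x * \<Phi> (W n x))\<bar> \<le> \<eta> n" by (rule eW[OF x])
      moreover note N[OF n] j
      ultimately show "\<bar>DD n x - (p x - q x * \<Phi> (U x))\<bar> \<le> \<epsilon>"
        by (simp add: algebra_simps)
    qed
  qed
  then obtain g where g: "\<And>x. x \<in> {0..1} \<Longrightarrow> (\<lambda>n. W n x) \<longlonglongrightarrow> g x"
      "\<And>x. x \<in> {0..1} \<Longrightarrow> (g has_real_derivative (p x - q x * \<Phi> (U x))) (at x within {0..1})"
    by blast
  have gU: "g x = U x" if "x \<in> {0..1}" for x using LIMSEQ_unique[OF g(1)[OF that] conv[OF that]] .
  show ?thesis
  proof (intro exI conjI ballI)
    show "g 0 = u0" using g(1)[of 0] W0 LIMSEQ_unique[OF _ tendsto_const] by auto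
    fix t :: real assume t: "t \<in> {0..1}"
    show "(g has_real_derivative (p t - q t * \<Phi> (g t))) (at t within {0..1})"
      using g(2)[OF t] gU[OF t] by simp
  qed
qed




lemma P_nonneg:
  fixes \<epsilon> y :: real assumes e: "\<epsilon> > 0"
  shows "0 \<le> 1 - \<epsilon>^2 / (\<epsilon> + max y 0)^2"
proof -
  have "\<epsilon>^2 \<le> (\<epsilon> + max y 0)^2" using e by (intro power_mono) auto
  moreover have "(\<epsilon> + max y 0)^2 > 0" using e by (intro zero_less_power) linarith
  ultimately show ?thesis by (simp add: divide_le_eq_1)
qed

lemma P_mono:
  fixes \<epsilon> x y :: real assumes e: "\<epsilon> > 0" and xy: "x \<le> y"
  shows "1 - \<epsilon>^2 / (\<epsilon> + max x 0)^2 \<le> 1 - \<epsilon>^2 / (\<epsilon> + max y 0)^2"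
proof -
  have "(\<epsilon> + max x 0)^2 \<le> (\<epsilon> + max y 0)^2" using e xy by (intro power_mono) auto
  moreover have p1: "(\<epsilon> + max x 0)^2 > 0" using e by (intro zero_less_power) linarith
  moreover have p2: "(\<epsilon> + max y 0)^2 > 0" using e by (intro zero_less_power) linarith
  ultimately have "\<epsilon>^2 / (\<epsilon> + max y 0)^2 \<le> \<epsilon>^2 / (\<epsilon> + max x 0)^2"
    by (intro divide_left_mono mult_pos_pos) auto
  thus ?thesis by simp
qed

lemma P_lip:
  fixes \<epsilon> x y :: real assumes e: "\<epsilon> > 0"
  shows "\<bar>(1 - \<epsilon>^2 / (\<epsilon> + max x 0)^2) - (1 - \<epsilon>^2 / (\<epsilon> + max y 0)^2)\<bar> \<le> (2/\<epsilon>) * \<bar>x - y\<bar>"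
proof -
  define a where "a = max x 0"
  define b where "b = max y 0"
  have a0: "a \<ge> 0" and b0: "b \<ge> 0" by (auto simp: a_def b_def)
  have ab: "\<bar>a - b\<bar> \<le> \<bar>x - y\<bar>" unfolding a_def b_def by linarith
  define \<alpha> where "\<alpha> = \<epsilon> / (\<epsilon> + a)"
  define \<beta> where "\<beta> = \<epsilon> / (\<epsilon> + b)"
  have pa: "\<epsilon> + a > 0" "\<epsilon> + b > 0" using e a0 b0 by auto
  have al: "0 \<le> \<alpha>" "\<alpha> \<le> 1" using e a0 pa by (auto simp: \<alpha>_def)
  have bl: "0 \<le> \<beta>" "\<beta> \<le> 1" using e b0 pa by (auto simp: \<beta>_def)
  have eq: "(1 - \<epsilon>^2 / (\<epsilon> + a)^2) - (1 - \<epsilon>^2 / (\<epsilon> + b)^2) = (\<beta> - \<alpha>) * (\<beta> + \<alpha>)"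
    unfolding \<alpha>_def \<beta>_def by (simp add: power_divide algebra_simps power2_eq_square)
  have dba: "\<beta> - \<alpha> = \<epsilon> * (a - b) / ((\<epsilon> + a) * (\<epsilon> + b))"
    unfolding \<alpha>_def \<beta>_def using pa by (simp add: field_simps)
  have den: "\<epsilon> * \<epsilon> \<le> (\<epsilon> + a) * (\<epsilon> + b)" using e a0 b0 by (intro mult_mono) auto
  have "\<bar>\<beta> - \<alpha>\<bar> = \<epsilon> * \<bar>a - b\<bar> / ((\<epsilon> + a) * (\<epsilon> + b))"
    unfolding dba using pa e by (simp add: abs_mult)
  also have "\<dots> \<le> \<epsilon> * \<bar>a - b\<bar> / (\<epsilon> * \<epsilon>)"
    using e den pa by (intro divide_left_mono mult_pos_pos) auto
  also have "\<dots> = \<bar>a - b\<bar> / \<epsilon>" using e by simp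
  finally have d1: "\<bar>\<beta> - \<alpha>\<bar> \<le> \<bar>a - b\<bar> / \<epsilon>" .
  have "\<bar>(\<beta> - \<alpha>) * (\<beta> + \<alpha>)\<bar> \<le> (\<bar>a - b\<bar> / \<epsilon>) * 2"
    unfolding abs_mult by (rule mult_mono[OF d1]) (use al bl e in auto)
  also have "\<dots> \<le> (2/\<epsilon>) * \<bar>x - y\<bar>" using ab e by (simp add: field_simps)
  finally show ?thesis using eq unfolding a_def b_def by simp
qed

lemma sqrt_shift_approx:
  fixes x d :: real assumes "0 \<le> x" "0 \<le> d"
  shows "\<bar>(sqrt (x + d) - sqrt d) - sqrt x\<bar> \<le> sqrt d"
proof -
  have "sqrt x \<le> sqrt (x + d)" using assms by simp
  moreover have "sqrt (x + d) \<le> sqrt x + sqrt d" using assms by (rule sqrt_add_le_add_sqrt)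
  ultimately show ?thesis by (simp add: abs_le_iff)
qed

lemma sqrt_shift_lip:
  fixes x y d :: real assumes "0 \<le> x" "0 \<le> y" "0 < d"
  shows "\<bar>(sqrt (x + d) - sqrt d) - (sqrt (y + d) - sqrt d)\<bar> \<le> (1 / sqrt d) * \<bar>x - y\<bar>"
proof -
  define u where "u = sqrt (x + d)"
  define v where "v = sqrt (y + d)"
  have u: "sqrt d \<le> u" and v: "sqrt d \<le> v" using assms by (auto simp: u_def v_def)
  have sd: "sqrt d > 0" using assms by simp
  have "(u - v) * (u + v) = x - y" using assms by (simp add: u_def v_def algebra_simps)
  moreover have "u + v \<ge> 0" using u v sd by linarith
  ultimately have "\<bar>u - v\<bar> * (u + v) = \<bar>x - y\<bar>" by (metis abs_mult abs_of_nonneg)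
  moreover have "sqrt d \<le> u + v" using u v sd by linarith
  hence "\<bar>u - v\<bar> * sqrt d \<le> \<bar>u - v\<bar> * (u + v)" by (intro mult_left_mono) auto
  ultimately have "\<bar>u - v\<bar> * sqrt d \<le> \<bar>x - y\<bar>" by simp
  hence "\<bar>u - v\<bar> \<le> \<bar>x - y\<bar> / sqrt d" using sd by (simp add: le_divide_eq)
  thus ?thesis by (simp add: u_def v_def)
qed

lemma Phi_eq:
  fixes \<epsilon> y :: real assumes e: "\<epsilon> > 0"
  shows "(if y \<le> 0 then 0 else sqrt (y * (2*\<epsilon> + y)) / (\<epsilon> + y)) = sqrt (1 - \<epsilon>^2 / (\<epsilon> + max y 0)^2)"
proof (cases "y \<le> 0")
  case True thus ?thesis using e by simp
next
  case False
  hence y: "y > 0" by simp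
  have nz: "(\<epsilon> + y)^2 \<noteq> 0" using e y by simp
  have h: "(\<epsilon> + y)^2 - \<epsilon>^2 = y * (2*\<epsilon> + y)" by (simp add: power2_eq_square algebra_simps)
  have "1 - \<epsilon>^2 / (\<epsilon> + y)^2 = ((\<epsilon> + y)^2 - \<epsilon>^2) / (\<epsilon> + y)^2"
    using nz by (simp add: diff_divide_distrib)
  hence "1 - \<epsilon>^2 / (\<epsilon> + y)^2 = (y * (2*\<epsilon> + y)) / (\<epsilon> + y)^2" using h by simp
  hence "sqrt (1 - \<epsilon>^2 / (\<epsilon> + y)^2) = sqrt (y * (2*\<epsilon> + y)) / (\<epsilon> + y)"
    using e y by (simp add: real_sqrt_divide)
  thus ?thesis using False y by simp
qed




theorem lemma2:
  fixes f h dh :: "real \<Rightarrow> real" and \<epsilon> c :: real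
  assumes f_cont: "continuous_on {0..1} f"
    and f0: "f 0 = 0" and f1: "f 1 = 0"
    and f_pos: "\<And>s. 0 < s \<Longrightarrow> s < 1 \<Longrightarrow> f s > 0"
    and f_k: "\<exists>k>0. \<forall>s\<in>{0..1}. f s \<le> k * s \<and> f s \<le> k * (1 - s)"
    and h_deriv: "\<And>v. v \<in> {0..1} \<Longrightarrow> (h has_real_derivative dh v) (at v within {0..1})"
    and h_C2: "\<exists>d2h. (\<forall>v\<in>{0..1}. (dh has_real_derivative d2h v) (at v within {0..1}))
                     \<and> continuous_on {0..1} d2h"
    and h0: "h 0 = 0" and dh0: "dh 0 = 0"
    and eps: "\<epsilon> > 0"
    and c_ge: "c \<ge> (SUP v\<in>{0..1}. f v) - (INF v\<in>{0..1}. dh v)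
                   + 2 * sqrt (\<epsilon> * (SUP v\<in>{0<..1}. f v / v))"
  shows "\<exists>y :: real \<Rightarrow> real.
           (\<forall>v\<in>{0..1}. (y has_real_derivative
               ((c + dh v) * sqrt (y v * (2 * \<epsilon> + y v)) / (\<epsilon> + y v) - f v))
               (at v within {0..1}))
           \<and> y 0 = 0 \<and> y 1 = 0 \<and> (\<forall>v. 0 < v \<and> v < 1 \<longrightarrow> y v > 0)"
proof -
  obtain k where k: "k > 0" "\<And>s. s \<in> {0..1} \<Longrightarrow> f s \<le> k * s" using f_k by blast
  have fnn: "0 \<le> f v" if "v \<in> {0..1}" for v
    using that f0 f1 f_pos[of v] by (cases "v = 0 \<or> v = 1") auto
  define M where "M = (SUP v\<in>{0..1}. f v)"
  define m where "m = (INF v\<in>{0..1}. dh v)"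
  define L where "L = (SUP v\<in>{0<..1}. f v / v)"
  have bddf: "bdd_above (f ` {0..1})"
  proof (rule bdd_aboveI2)
    fix v :: real assume "v \<in> {0..1}"
    thus "f v \<le> k" using k(2)[of v] k(1) by (auto intro: order_trans[OF _ mult_left_le])
  qed
  have fM: "f v \<le> M" if "v \<in> {0..1}" for v unfolding M_def by (rule cSUP_upper[OF that bddf])
  have bddL: "bdd_above ((\<lambda>v. f v / v) ` {0<..1})"
  proof (rule bdd_aboveI2)
    fix v :: real assume v: "v \<in> {0<..1}"
    hence "f v \<le> k * v" using k(2)[of v] by auto
    thus "f v / v \<le> k" using v by (simp add: divide_le_eq)
  qed
  have fL': "f v / v \<le> L" if "v \<in> {0<..1}" for v unfolding L_def by (rule cSUP_upper[OF that bddL])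
  have fL: "f v \<le> L * v" if "v \<in> {0..1}" for v
  proof (cases "v = 0")
    case True thus ?thesis using f0 by simp
  next
    case False
    hence "v \<in> {0<..1}" using that by auto
    thus ?thesis using fL'[of v] by (simp add: divide_le_eq)
  qed
  have Lpos: "L > 0"
  proof -
    have "f (1/2) / (1/2) > 0" using f_pos[of "1/2"] by simp
    moreover have "f (1/2) / (1/2) \<le> L" by (rule fL') auto
    ultimately show ?thesis by linarith
  qed
  obtain d2h where d2h: "\<And>v. v \<in> {0..1} \<Longrightarrow> (dh has_real_derivative d2h v) (at v within {0..1})"
    using h_C2 by blast
  have cdh: "continuous_on {0..1} dh" by (rule deriv_cont[OF d2h])
  obtain Bdh where Bdh: "\<And>v. v \<in> {0..1} \<Longrightarrow> \<bar>dh v\<bar> \<le> Bdh" using bound_cont[OF cdh] by blast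
  have bddm: "bdd_below (dh ` {0..1})"
    by (rule bdd_belowI2[of _ "- Bdh"]) (use Bdh in force)
  have dhm: "m \<le> dh v" if "v \<in> {0..1}" for v unfolding m_def by (rule cINF_lower[OF bddm that])
  define lam where "lam = sqrt (\<epsilon> * L)"
  have lpos: "lam > 0" using eps Lpos by (simp add: lam_def)
  have l2: "lam^2 = \<epsilon> * L" using eps Lpos by (simp add: lam_def)
  have M0: "0 \<le> M" using fM[of 0] f0 by simp
  have A: "M + 2 * lam \<le> c + dh v" if "v \<in> {0..1}" for v
    using c_ge dhm[OF that] unfolding M_def[symmetric] m_def[symmetric] L_def[symmetric] lam_def by linarith
  define \<Phi> where "\<Phi> y = (if y \<le> 0 then 0 else sqrt (y * (2*\<epsilon> + y)) / (\<epsilon> + y))" for y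
  define P where "P y = 1 - \<epsilon>^2 / (\<epsilon> + max y 0)^2" for y
  have \<Phi>P: "\<Phi> y = sqrt (P y)" for y unfolding \<Phi>_def P_def by (rule Phi_eq[OF eps])
  have Pnn: "0 \<le> P y" for y unfolding P_def by (rule P_nonneg[OF eps])
  have \<Phi>mono: "\<Phi> x \<le> \<Phi> y" if "x \<le> y" for x y
    unfolding \<Phi>P P_def using P_mono[OF eps that] by simp
  define \<Phi>n where "\<Phi>n n y = sqrt (P y + (inverse (real (Suc n)))^2) - sqrt ((inverse (real (Suc n)))^2)" for n y
  have approx: "\<bar>\<Phi>n n y - \<Phi> y\<bar> \<le> inverse (real (Suc n))" for n y
    using sqrt_shift_approx[OF Pnn[of y], of "(inverse (real (Suc n)))^2"]
    unfolding \<Phi>n_def \<Phi>P by simp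
  have lip: "\<exists>K\<ge>0. \<forall>x y. \<bar>\<Phi>n n x - \<Phi>n n y\<bar> \<le> K * \<bar>x - y\<bar>" for n
  proof (intro exI conjI allI)
    define d where "d = (inverse (real (Suc n)))^2"
    have d: "0 < d" by (simp add: d_def)
    show "0 \<le> (1 / sqrt d) * (2/\<epsilon>)" using d eps by simp
    fix x y
    have "\<bar>\<Phi>n n x - \<Phi>n n y\<bar> \<le> (1 / sqrt d) * \<bar>P x - P y\<bar>"
      unfolding \<Phi>n_def d_def[symmetric] by (rule sqrt_shift_lip[OF Pnn Pnn d])
    also have "\<dots> \<le> (1 / sqrt d) * ((2/\<epsilon>) * \<bar>x - y\<bar>)"
      unfolding P_def using d by (intro mult_left_mono P_lip[OF eps]) auto
    finally show "\<bar>\<Phi>n n x - \<Phi>n n y\<bar> \<le> (1 / sqrt d) * (2/\<epsilon>) * \<bar>x - y\<bar>" by simp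
  qed
  have img: "(\<lambda>t. 1 - t) ` {0..1} = {0..1::real}"
  proof
    show "(\<lambda>t. 1 - t) ` {0..1} \<subseteq> {0..1::real}" by auto
    show "{0..1::real} \<subseteq> (\<lambda>t. 1 - t) ` {0..1}"
    proof
      fix x :: real assume "x \<in> {0..1}"
      thus "x \<in> (\<lambda>t. 1 - t) ` {0..1}" by (intro rev_image_eqI[of "1 - x"]) auto
    qed
  qed
  have c1: "continuous_on {0..1} (\<lambda>t::real. 1 - t)" by (intro continuous_intros)
  have cp: "continuous_on {0..1} (\<lambda>t. f (1 - t))"
    by (rule continuous_on_compose2[OF f_cont c1]) (use img in auto)
  have cq: "continuous_on {0..1} (\<lambda>t. c + dh (1 - t))"
    by (intro continuous_intros continuous_on_compose2[OF cdh c1]) (use img in auto)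
  have qnn: "0 \<le> c + dh (1 - t)" if "t \<in> {0..1}" for t
    using A[of "1 - t"] that M0 lpos by auto
  have e: "(\<lambda>n. inverse (real (Suc n))) \<longlonglongrightarrow> 0" by (rule LIMSEQ_inverse_real_of_nat)
  obtain u where u0: "u 0 = 0" and du: "\<And>t. t \<in> {0..1} \<Longrightarrow>
      (u has_real_derivative (f (1 - t) - (c + dh (1 - t)) * \<Phi> (u t))) (at t within {0..1})"
    using exist_mono[OF cp cq qnn \<Phi>mono approx e lip, of 0] by blast
  define Y where "Y v = u (1 - v)" for v
  have dY: "(Y has_real_derivative ((c + dh v) * \<Phi> (Y v) - f v)) (at v within {0..1})"
    if v: "v \<in> {0..1}" for v
  proof -
    have d1: "((\<lambda>t::real. 1 - t) has_real_derivative -1) (at v within {0..1})"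
      by (auto intro!: derivative_eq_intros)
    have "1 - v \<in> {0..1}" using v by auto
    from du[OF this] have d2: "(u has_real_derivative (f (1 - (1 - v)) - (c + dh (1 - (1 - v))) * \<Phi> (u (1 - v))))
         (at ((\<lambda>t. 1 - t) v) within (\<lambda>t. 1 - t) ` {0..1})" unfolding img by simp
    from DERIV_image_chain[OF d2 d1] show ?thesis
      by (simp add: Y_def[abs_def] comp_def algebra_simps)
  qed
  have Y1: "Y 1 = 0" by (simp add: Y_def u0)
  have Ynn: "0 \<le> Y v" if v: "v \<in> {0..1}" for v
  proof -
    have "- Y v \<le> 0"
    proof (rule barrier[where D="\<lambda>v. - Y v" and D'="\<lambda>v. - ((c + dh v) * \<Phi> (Y v) - f v)", OF _ _ _ v])
      show "((\<lambda>v. - Y v) has_real_derivative - ((c + dh t) * \<Phi> (Y t) - f t)) (at t within {0..1})"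
        if "t \<in> {0..1}" for t using DERIV_minus[OF dY[OF that]] by simp
      show "0 \<le> - ((c + dh t) * \<Phi> (Y t) - f t)" if "t \<in> {0..1}" "0 < - Y t" for t
        using that fnn[of t] by (simp add: \<Phi>_def)
    qed (simp add: Y1)
    thus ?thesis by simp
  qed
  define R where "R v = sqrt (\<epsilon>^2 + lam^2 * v^2)" for v
  define B where "B v = R v - \<epsilon>" for v
  have Rpos: "R v > 0" for v unfolding R_def using eps by (intro real_sqrt_gt_zero add_pos_nonneg) auto
  have Rge: "\<epsilon> \<le> R v" for v unfolding R_def using eps
    by (intro real_le_rsqrt) auto
  have Rle: "R v \<le> \<epsilon> + lam * v" if "v \<ge> 0" for v
  proof -
    have "R v \<le> sqrt (\<epsilon>^2) + sqrt (lam^2 * v^2)" unfolding R_def by (rule sqrt_add_le_add_sqrt) auto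
    also have "\<dots> = \<epsilon> + lam * v" using eps lpos that by (simp add: real_sqrt_mult)
    finally show ?thesis .
  qed
  have dB: "(B has_real_derivative (lam^2 * v / R v)) (at v within {0..1})" for v
  proof -
    have p: "0 < \<epsilon>^2 + lam^2 * v^2" using eps by (intro add_pos_nonneg) auto
    have d1: "((\<lambda>v. \<epsilon>^2 + lam^2 * v^2) has_real_derivative lam^2 * (2 * v)) (at v within {0..1})"
      by (auto intro!: derivative_eq_intros)
    have "(R has_real_derivative (inverse (R v) / 2) * (lam^2 * (2 * v))) (at v within {0..1})"
      unfolding R_def by (rule DERIV_chain2[OF DERIV_real_sqrt[OF p] d1])
    hence "(B has_real_derivative (inverse (R v) / 2) * (lam^2 * (2 * v)) - 0) (at v within {0..1})"
      unfolding B_def[abs_def] by (intro DERIV_diff DERIV_const)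
    thus ?thesis by (rule DERIV_cong) (use Rpos[of v] in \<open>simp add: field_simps\<close>)
  qed
  have \<Phi>B: "\<Phi> (B v) = lam * v / R v" if "v \<ge> 0" for v
  proof -
    have "P (B v) = 1 - \<epsilon>^2 / (R v)^2"
      unfolding P_def B_def using Rge[of v] by (simp add: max_def)
    also have "\<dots> = (lam * v / R v)^2"
    proof -
      have r2: "(R v)^2 = \<epsilon>^2 + lam^2 * v^2" unfolding R_def using eps by simp
      have "(lam * v / R v)^2 = (lam^2 * v^2) / (R v)^2" by (simp add: power_divide power_mult_distrib)
      also have "\<dots> = ((R v)^2 - \<epsilon>^2) / (R v)^2" using r2 by simp
      also have "\<dots> = 1 - \<epsilon>^2 / (R v)^2" using Rpos[of v] by (simp add: diff_divide_distrib)
      finally show ?thesis by simp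
    qed
    finally show ?thesis unfolding \<Phi>P using lpos that Rpos[of v] by simp
  qed
  have Bsuper: "lam^2 * v / R v \<le> (c + dh v) * \<Phi> (B v) - f v" if v: "v \<in> {0..1}" for v
  proof -
    define a where "a = c + dh v"
    have aM: "M + 2 * lam \<le> a" using A[OF v] by (simp add: a_def)
    have v0: "0 \<le> v" using v by simp
    have "f v * R v \<le> f v * (\<epsilon> + lam * v)" using Rle[OF v0] fnn[OF v] by (rule mult_left_mono)
    also have "\<dots> = f v * \<epsilon> + f v * (lam * v)" by (simp add: algebra_simps)
    also have "\<dots> \<le> (L * v) * \<epsilon> + M * (lam * v)"
      using fL[OF v] fM[OF v] eps lpos v0 by (intro add_mono mult_right_mono) auto
    also have "\<dots> = lam * v * (lam + M)" using l2 by (simp add: power2_eq_square algebra_simps)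
    also have "\<dots> \<le> lam * v * (a - lam)" using aM lpos v0 by (intro mult_left_mono) auto
    finally have key: "f v * R v \<le> lam * v * (a - lam)" .
    have "a * \<Phi> (B v) - f v - lam^2 * v / R v = (lam * v * (a - lam) - f v * R v) / R v"
      unfolding \<Phi>B[OF v0] using Rpos[of v] by (simp add: field_simps power2_eq_square)
    also have "\<dots> \<ge> 0" using key Rpos[of v] by simp
    finally show ?thesis unfolding a_def by simp
  qed
  have YB: "Y v - B v \<le> 0" if v: "v \<in> {0..1}" for v
  proof (rule barrier[where D="\<lambda>v. Y v - B v" and D'="\<lambda>v. ((c + dh v) * \<Phi> (Y v) - f v) - lam^2 * v / R v", OF _ _ _ v])
    show "((\<lambda>v. Y v - B v) has_real_derivative ((c + dh t) * \<Phi> (Y t) - f t) - lam^2 * t / R t) (at t within {0..1})"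
      if "t \<in> {0..1}" for t by (rule DERIV_diff[OF dY[OF that] dB])
    show "0 \<le> ((c + dh t) * \<Phi> (Y t) - f t) - lam^2 * t / R t" if t: "t \<in> {0..1}" "0 < Y t - B t" for t
    proof -
      have "\<Phi> (B t) \<le> \<Phi> (Y t)" using t by (intro \<Phi>mono) simp
      hence "(c + dh t) * \<Phi> (B t) \<le> (c + dh t) * \<Phi> (Y t)" using qnn[of "1 - t"] t by (intro mult_left_mono) auto
      thus ?thesis using Bsuper[OF t(1)] by linarith
    qed
    have "B 1 > 0" unfolding B_def R_def using eps lpos
      by (simp add: real_less_rsqrt power2_eq_square) 
    thus "Y 1 - B 1 \<le> 0" using Y1 by simp
  qed
  have Y0: "Y 0 = 0"
  proof -
    have "B 0 = 0" unfolding B_def R_def using eps by simp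
    thus ?thesis using YB[of 0] Ynn[of 0] by simp
  qed
  have Ypos: "Y v > 0" if vv: "0 < v" "v < 1" for v
  proof (rule ccontr)
    assume "\<not> Y v > 0"
    hence Yv: "Y v = 0" using Ynn[of v] vv by simp
    have "(Y has_real_derivative ((c + dh v) * \<Phi> (Y v) - f v)) (at v)"
      using dY[of v] vv at_within_Icc_at[of 0 v 1] by auto
    hence d: "(Y has_real_derivative (- f v)) (at v)" using Yv by (simp add: \<Phi>_def)
    obtain d where d: "d > 0" "\<And>h. h > 0 \<Longrightarrow> h < d \<Longrightarrow> Y v > Y (v + h)"
      using DERIV_neg_dec_right[OF d] f_pos[OF vv] by auto
    define h where "h = min (d/2) ((1 - v)/2)"
    have "h > 0" "h < d" using d vv by (auto simp: h_def)
    hence "Y (v + h) < 0" using d(2) Yv by auto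
    moreover have "h \<le> (1 - v)/2" unfolding h_def by (rule min.cobounded2)
    hence "v + h \<in> {0..1}" using vv \<open>h > 0\<close> by auto
    ultimately show False using Ynn by fastforce
  qed
  show ?thesis
  proof (intro exI conjI ballI allI impI)
    fix v :: real assume v: "v \<in> {0..1}"
    have eq: "(c + dh v) * \<Phi> (Y v) - f v = (c + dh v) * sqrt (Y v * (2 * \<epsilon> + Y v)) / (\<epsilon> + Y v) - f v"
      using Ynn[OF v] eps by (cases "Y v = 0") (auto simp: \<Phi>_def)
    show "(Y has_real_derivative (c + dh v) * sqrt (Y v * (2 * \<epsilon> + Y v)) / (\<epsilon> + Y v) - f v) (at v within {0..1})"
      using dY[OF v] unfolding eq .
  next
    show "Y 0 = 0" by (rule Y0)
    show "Y 1 = 0" by (rule Y1)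
  next
    fix v :: real assume "0 < v \<and> v < 1"
    thus "0 < Y v" using Ypos by blast
  qed
qed


end
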